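(* Let $\hat H$, $\tilde\tau>0$ and $\Phi$ be as in the context. If $(\alpha,\beta)$ lies in $$\mathcal{R}=\{(\alpha,\beta)\in\mathbb{R}^2:\ |\alpha|-1<\beta<1\},$$ then every root $w$ of $\Phi(w)=0$ satisfies $\operatorname{Re} w<0$, i.e. the equilibrium is locally asymptotically stable, regardless of the delay kernel and of $\tilde\tau>0$. Moreover $\mathcal{R}\subset\mathcal{S}=\{\alpha<2,\ \alpha-1<\beta<(\alpha-4)^2/4\}$.
   Context: Let $g:[0,\infty)\to[0,\infty)$ be a probability density with mean $\int_0^\infty t\,g(t)\,dt=1$ (or the Dirac measure at $1$), and let $\hat H(w)=\int_0^\infty g(s)e^{-ws}\,ds$; then $\hat H(0)=1$, $\hat H'(0)=-1$, and $|\hat H(w)|\le 1$ for $\operatorname{Re} w\ge 0$. The delay kernel with mean $\tau>0$ is $h(t)=\tau^{-1}g(t/\tau)$. For a time constant $\bar\tau>0$ put $\tilde\tau=\tau/\bar\tau$. For $\alpha,\beta\in\mathbb{R}$ the (rescaled) characteristic equation of the linearized coupled Wilson–Cowan system is $$\Phi(w):=(w+\tilde\tau)^4-\alpha\,\tilde\tau^2(w+\tilde\tau)^2\hat H(w)^2+\beta\,\tilde\tau^4\hat H(w)^4=0,$$ equivalently $Q(w)^2-\alpha Q(w)+\beta=0$ with $Q(w)=\big(\frac{w+\tilde\tau}{\tilde\tau\hat H(w)}\big)^2$. The equilibrium is locally asymptotically stable iff all roots have negative real part. $\mathcal{S}$ is the no-delay stability region. *)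

theory Defs
  imports "HOL-Analysis.Analysis"
begin

definition delay_density :: "(real \<Rightarrow> real) \<Rightarrow> bool" where
  "delay_density g \<longleftrightarrow>
     (\<forall>t\<ge>0. g t \<ge> 0) \<and>
     g integrable_on {0..} \<and> integral {0..} g = 1 \<and>
     (\<lambda>t. t * g t) integrable_on {0..} \<and> integral {0..} (\<lambda>t. t * g t) = 1"

definition laplace_kernel :: "(real \<Rightarrow> real) \<Rightarrow> complex \<Rightarrow> complex" where
  "laplace_kernel g w = integral {0..} (\<lambda>s. complex_of_real (g s) * exp (- w * complex_of_real s))"

text \<open>Hhat is the Laplace transform of an admissible kernel: a probability density with
  mean 1, or the Dirac measure at 1 (Hhat(w) = e^{-w}).\<close>
definition admissible_Hhat :: "(complex \<Rightarrow> complex) \<Rightarrow> bool" where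
  "admissible_Hhat H \<longleftrightarrow>
     (\<exists>g. delay_density g \<and> H = laplace_kernel g) \<or> H = (\<lambda>w. exp (- w))"

definition Phi :: "real \<Rightarrow> real \<Rightarrow> real \<Rightarrow> (complex \<Rightarrow> complex) \<Rightarrow> complex \<Rightarrow> complex" where
  "Phi \<alpha> \<beta> \<tau>t H w =
     (w + of_real \<tau>t) ^ 4
     - of_real \<alpha> * of_real \<tau>t ^ 2 * (w + of_real \<tau>t) ^ 2 * H w ^ 2
     + of_real \<beta> * of_real \<tau>t ^ 4 * H w ^ 4"

definition region_R :: "(real \<times> real) set" where
  "region_R = {(\<alpha>, \<beta>). \<bar>\<alpha>\<bar> - 1 < \<beta> \<and> \<beta> < 1}"

text \<open>No-delay stability region S.\<close>
definition region_S :: "(real \<times> real) set" where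
  "region_S = {(\<alpha>, \<beta>). \<alpha> < 2 \<and> \<alpha> - 1 < \<beta> \<and> \<beta> < (\<alpha> - 4)^2 / 4}"

end

theory Submission
  imports Defs
begin

lemma Hbound:
  assumes "admissible_Hhat H" "Re w \<ge> 0"
  shows "norm (H w) \<le> 1"
  using assms(1) unfolding admissible_Hhat_def
proof
  assume "\<exists>g. delay_density g \<and> H = laplace_kernel g"
  then obtain g where g: "delay_density g" and H: "H = laplace_kernel g" by blast
  let ?f = "\<lambda>s. complex_of_real (g s) * exp (- w * complex_of_real s)"
  have gi: "g integrable_on {0..}" and g1: "integral {0..} g = 1" and gp: "\<forall>t\<ge>0. g t \<ge> 0"
    using g unfolding delay_density_def by auto
  show ?thesis
  proof (cases "?f integrable_on {0..}")
    case True
    have "norm (integral {0..} ?f) \<le> integral {0..} g"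
    proof (rule integral_norm_bound_integral[OF True gi])
      fix s :: real assume "s \<in> {0..}"
      hence s: "s \<ge> 0" by simp
      have "norm (exp (- w * complex_of_real s)) = exp (- Re w * s)"
        by (simp add: norm_exp_eq_Re)
      also have "\<dots> \<le> 1" using s assms(2) by (simp add: mult_nonneg_nonneg)
      finally have "norm (exp (- w * complex_of_real s)) \<le> 1" .
      hence "\<bar>g s\<bar> * norm (exp (- w * complex_of_real s)) \<le> \<bar>g s\<bar> * 1"
        by (intro mult_left_mono) auto
      thus "norm (?f s) \<le> g s" using gp s by (simp add: norm_mult)
    qed
    thus ?thesis using g1 H by (simp add: laplace_kernel_def)
  next
    case False
    thus ?thesis using H by (simp add: laplace_kernel_def not_integrable_integral)
  qed
next
  assume "H = (\<lambda>w. exp (- w))"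
  thus ?thesis using assms(2) by (simp add: norm_exp_eq_Re)
qed

lemma quad_real:
  fixes a \<alpha> \<beta> :: real
  assumes "\<bar>\<alpha>\<bar> - 1 < \<beta>" "\<beta> < 1" "\<bar>a\<bar> \<ge> 1"
  shows "a^2 - \<alpha>*a + \<beta> \<noteq> 0"
proof (cases "a \<ge> 0")
  case True
  hence a1: "a \<ge> 1" using assms by auto
  have "(a-1)*(a+1-\<alpha>) \<ge> 0" using a1 assms by (intro mult_nonneg_nonneg) auto
  moreover have "1 - \<alpha> + \<beta> > 0" using assms by auto
  ultimately show ?thesis by (auto simp: algebra_simps power2_eq_square)
next
  case False
  hence a1: "a \<le> -1" using assms by auto
  have "(-a-1)*(-a+1+\<alpha>) \<ge> 0" using a1 assms by (intro mult_nonneg_nonneg) auto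
  moreover have "1 + \<alpha> + \<beta> > 0" using assms by auto
  ultimately show ?thesis by (auto simp: algebra_simps power2_eq_square)
qed

lemma quad_cplx:
  fixes q :: complex and \<alpha> \<beta> :: real
  assumes "\<bar>\<alpha>\<bar> - 1 < \<beta>" "\<beta> < 1" "norm q \<ge> 1"
  shows "q^2 - of_real \<alpha> * q + of_real \<beta> \<noteq> 0"
proof
  assume eq: "q^2 - of_real \<alpha> * q + of_real \<beta> = 0"
  obtain a b where q: "q = Complex a b" by (cases q)
  from eq have re: "a^2 - b^2 - \<alpha>*a + \<beta> = 0" and im: "2*a*b - \<alpha>*b = 0"
    unfolding q by (simp_all add: complex_eq_iff power2_eq_square algebra_simps)
  show False
  proof (cases "b = 0")
    case True
    have "norm q = \<bar>a\<bar>" using True q by (simp add: cmod_def)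
    thus False using quad_real[OF assms(1,2), of a] re True assms(3) by auto
  next
    case False
    hence a: "a = \<alpha>/2" using im by (auto simp: algebra_simps)
    have al: "\<alpha> = 2*a" using a by simp
    have "a^2 + b^2 = \<beta>" using re unfolding al by (simp add: power2_eq_square algebra_simps)
    hence "norm q ^ 2 = \<beta>" using q by (simp add: cmod_def) (metis add_nonneg_nonneg zero_le_power2)
    moreover have "norm q ^ 2 \<ge> 1" using assms(3)
      by (metis one_le_power)
    ultimately show False using assms by auto
  qed
qed

theorem theorem5:
  fixes H :: "complex \<Rightarrow> complex" and \<tau>t \<alpha> \<beta> :: real
  assumes "admissible_Hhat H"
    and "\<tau>t > 0"
    and "(\<alpha>, \<beta>) \<in> region_R"
  shows "(\<forall>w. Phi \<alpha> \<beta> \<tau>t H w = 0 \<longrightarrow> Re w < 0) \<and> region_R \<subseteq> region_S"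
proof
  have R: "\<bar>\<alpha>\<bar> - 1 < \<beta>" "\<beta> < 1" using assms(3) by (auto simp: region_R_def)
  show "\<forall>w. Phi \<alpha> \<beta> \<tau>t H w = 0 \<longrightarrow> Re w < 0"
  proof (intro allI impI, rule ccontr)
    fix w assume P: "Phi \<alpha> \<beta> \<tau>t H w = 0" and nw: "\<not> Re w < 0"
    hence rw: "Re w \<ge> 0" by simp
    define z where "z = w + of_real \<tau>t"
    define u where "u = of_real \<tau>t * H w"
    have nH: "norm (H w) \<le> 1" using Hbound[OF assms(1) rw] .
    have nu: "norm u \<le> \<tau>t" unfolding u_def using nH assms(2)
      by (simp add: norm_mult mult_left_le)
    have "Re z \<ge> \<tau>t" using rw by (simp add: z_def)
    hence nz: "norm z \<ge> \<tau>t" using complex_Re_le_cmod order_trans by blast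
    have P2: "z^4 - of_real \<alpha> * z^2 * u^2 + of_real \<beta> * u^4 = 0"
      using P unfolding Phi_def z_def u_def by (simp add: algebra_simps power_mult_distrib)
    show False
    proof (cases "u = 0")
      case True
      hence "z = 0" using P2 by simp
      thus False using nz assms(2) by simp
    next
      case False
      define q where "q = (z/u)^2"
      have "norm (z/u) \<ge> 1" using nz nu False assms(2)
        by (simp add: norm_divide divide_simps)
      hence nq: "norm q \<ge> 1" unfolding q_def by (simp add: norm_power one_le_power)
      have "q^2 - of_real \<alpha> * q + of_real \<beta> = (z^4 - of_real \<alpha> * z^2 * u^2 + of_real \<beta> * u^4) / u^4"
        unfolding q_def using False by (simp add: field_simps)
      hence "q^2 - of_real \<alpha> * q + of_real \<beta> = 0" using P2 by simp
      thus False using quad_cplx[OF R nq] by simp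
    qed
  qed
next
  show "region_R \<subseteq> region_S"
  proof
    fix p assume "p \<in> region_R"
    then obtain a b where p: "p = (a,b)" and h: "\<bar>a\<bar> - 1 < b" "b < 1"
      by (auto simp: region_R_def)
    have a2: "a < 2" using h by auto
    have "4 < (a-4)^2"
    proof -
      have "2 < 4 - a" using a2 by simp
      hence "2^2 < (4-a)^2" by (intro power_strict_mono) auto
      thus ?thesis by (simp add: power2_commute)
    qed
    thus "p \<in> region_S" using p h a2 by (auto simp: region_S_def)
  qed
qed

end
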